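(* Let $\Gamma\subseteq\mathbb{R}^D$ ($D\in[1,\infty]$) be orthosymmetric, convex and compact. Then for every $\epsilon>0$, $$D\Big(\Gamma,\frac{\epsilon}{D_{\mathsf c}(\Gamma,\epsilon)}\Big)\ge\frac{D_{\mathsf c}(\Gamma,\epsilon)}{2}-2.$$
   Context: Orthosymmetric: closed under flipping signs of any coordinates. Kolmogorov dimension $D(\Gamma,\epsilon)$: the smallest integer $d$ such that $\inf_{\Pi_d}\sup_{\boldsymbol\theta\in\Gamma}\|\boldsymbol\theta-\Pi_d\boldsymbol\theta\|_2\le\epsilon$, the infimum over all $d$-dimensional (orthogonal) linear projections $\Pi_d$. Coordinate-wise Kolmogorov dimension $D_{\mathsf c}(\Gamma,\epsilon)$: the smallest integer $d$ such that there is a set $A$ of $d$ coordinate indices with $\sup_{\boldsymbol\theta\in\Gamma}\sum_{i\notin A}\theta_i^2\le\epsilon^2$. *)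

theory Defs
  imports "HOL-Analysis.Analysis"
begin

text \<open>Ambient space: the sequence space l2 over a countable index type 'i.
  A finite type 'i gives R^D with D = CARD('i); 'i = nat gives D = infinity.\<close>

definition l2 :: "('i \<Rightarrow> real) set" where
  "l2 = {f. (\<lambda>i. (f i)\<^sup>2) summable_on UNIV}"

definition l2inner :: "('i \<Rightarrow> real) \<Rightarrow> ('i \<Rightarrow> real) \<Rightarrow> real" where
  "l2inner f g = (\<Sum>\<^sub>\<infinity>i. f i * g i)"

definition l2norm :: "('i \<Rightarrow> real) \<Rightarrow> real" where
  "l2norm f = sqrt (\<Sum>\<^sub>\<infinity>i. (f i)\<^sup>2)"

definition l2dist :: "('i \<Rightarrow> real) \<Rightarrow> ('i \<Rightarrow> real) \<Rightarrow> real" where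
  "l2dist f g = l2norm (\<lambda>i. f i - g i)"

definition l2_compact :: "('i \<Rightarrow> real) set \<Rightarrow> bool" where
  "l2_compact S \<longleftrightarrow> compactin (Metric_space.mtopology l2 l2dist) S"

definition orthosymmetric :: "('i \<Rightarrow> real) set \<Rightarrow> bool" where
  "orthosymmetric S \<longleftrightarrow>
     (\<forall>x\<in>S. \<forall>s::'i \<Rightarrow> bool. (\<lambda>i. if s i then - x i else x i) \<in> S)"

definition convex_fun_set :: "('i \<Rightarrow> real) set \<Rightarrow> bool" where
  "convex_fun_set S \<longleftrightarrow>
     (\<forall>x\<in>S. \<forall>y\<in>S. \<forall>t::real. 0 \<le> t \<and> t \<le> 1 \<longrightarrow> (\<lambda>i. t * x i + (1 - t) * y i) \<in> S)"

text \<open>Orthonormal families of d vectors in l2; their span is the range of a d-dimensional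
  orthogonal projection, and every such projection arises this way.\<close>
definition orthonormal_family :: "nat \<Rightarrow> (nat \<Rightarrow> ('i \<Rightarrow> real)) \<Rightarrow> bool" where
  "orthonormal_family d u \<longleftrightarrow>
     (\<forall>j<d. u j \<in> l2) \<and> (\<forall>j<d. \<forall>k<d. l2inner (u j) (u k) = (if j = k then 1 else 0))"

definition proj :: "nat \<Rightarrow> (nat \<Rightarrow> ('i \<Rightarrow> real)) \<Rightarrow> ('i \<Rightarrow> real) \<Rightarrow> ('i \<Rightarrow> real)" where
  "proj d u x = (\<lambda>i. \<Sum>j<d. l2inner x (u j) * u j i)"

definition kolmogorov_width :: "('i \<Rightarrow> real) set \<Rightarrow> nat \<Rightarrow> ereal" where
  "kolmogorov_width S d =
     (INF u\<in>{u. orthonormal_family d u}. SUP x\<in>S. ereal (l2norm (\<lambda>i. x i - proj d u x i)))"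

definition kolmogorov_dim :: "('i \<Rightarrow> real) set \<Rightarrow> real \<Rightarrow> nat" where
  "kolmogorov_dim S eps = (LEAST d. kolmogorov_width S d \<le> ereal eps)"

definition coord_kolmogorov_dim :: "('i \<Rightarrow> real) set \<Rightarrow> real \<Rightarrow> nat" where
  "coord_kolmogorov_dim S eps =
     (LEAST d. \<exists>A. finite A \<and> card A = d \<and>
        (\<forall>x\<in>S. (\<Sum>\<^sub>\<infinity>i\<in>- A. (x i)\<^sup>2) \<le> eps\<^sup>2))"

end

theory Submission
  imports Defs
begin

lemma l2_sq_summable: "f \<in> l2 \<Longrightarrow> (\<lambda>i. (f i)\<^sup>2) summable_on A"
  unfolding l2_def using summable_on_subset by blast

lemma abs_prod_le_sq: "\<bar>a * b\<bar> \<le> a\<^sup>2 + (b::real)\<^sup>2"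
proof -
  have "0 \<le> (\<bar>a\<bar> - \<bar>b\<bar>)\<^sup>2" by simp
  then have "2 * (\<bar>a\<bar> * \<bar>b\<bar>) \<le> a\<^sup>2 + b\<^sup>2" by (simp add: power2_eq_square algebra_simps)
  moreover have "0 \<le> \<bar>a\<bar> * \<bar>b\<bar>" by simp
  ultimately show ?thesis by (simp add: abs_mult) (smt (verit) zero_le_power2)
qed

lemma l2_prod_summable:
  assumes "f \<in> l2" "g \<in> l2"
  shows "(\<lambda>i. f i * g i) summable_on A"
proof -
  have "(\<lambda>i. (f i)\<^sup>2 + (g i)\<^sup>2) summable_on A"
    using l2_sq_summable[OF assms(1)] l2_sq_summable[OF assms(2)] by (rule summable_on_add)
  then have "(\<lambda>i. norm (f i * g i)) summable_on A"
    apply (rule summable_on_comparison_test)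
     apply (simp add: abs_prod_le_sq del: abs_mult)
    by simp
  then show ?thesis using summable_on_iff_abs_summable_on_real by blast
qed

lemma l2_add: "f \<in> l2 \<Longrightarrow> g \<in> l2 \<Longrightarrow> (\<lambda>i. a * f i + b * g i) \<in> l2"
proof -
  assume f: "f \<in> l2" and g: "g \<in> l2"
  have "(\<lambda>i. a\<^sup>2 * (f i)\<^sup>2 + (2*a*b) * (f i * g i) + b\<^sup>2 * (g i)\<^sup>2) summable_on UNIV"
    by (intro summable_on_add summable_on_cmult_right l2_sq_summable l2_prod_summable f g)
  then show ?thesis unfolding l2_def by (simp add: power2_eq_square algebra_simps)
qed

lemma finite_support_l2:
  assumes "finite F" "\<And>i. i \<notin> F \<Longrightarrow> f i = 0"
  shows "f \<in> l2"
proof -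
  have "(\<lambda>i. (f i)\<^sup>2) summable_on F" using assms(1) by simp
  then have "(\<lambda>i. (f i)\<^sup>2) summable_on UNIV"
    by (rule summable_on_cong_neutral[where S=F, THEN iffD1, rotated -1]) (use assms in auto)
  then show ?thesis unfolding l2_def by simp
qed

lemma infsum_sum_swap:
  fixes f :: "'j \<Rightarrow> 'i \<Rightarrow> real"
  assumes "finite J" "\<And>j. j \<in> J \<Longrightarrow> f j summable_on A"
  shows "infsum (\<lambda>i. \<Sum>j\<in>J. f j i) A = (\<Sum>j\<in>J. infsum (f j) A)
     \<and> (\<lambda>i. \<Sum>j\<in>J. f j i) summable_on A"
  using assms
proof (induction J rule: finite_induct)
  case empty then show ?case by simp
next
  case (insert x F)
  then have a: "f x summable_on A" and b: "(\<lambda>i. \<Sum>j\<in>F. f j i) summable_on A"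
    and c: "infsum (\<lambda>i. \<Sum>j\<in>F. f j i) A = (\<Sum>j\<in>F. infsum (f j) A)" by auto
  show ?case using insert(1,2) infsum_add[OF a b] summable_on_add[OF a b] c by simp
qed

lemma infsum_finite_support:
  assumes "finite F" "\<And>i. i \<notin> F \<Longrightarrow> g i = (0::real)"
  shows "infsum g UNIV = sum g F"
proof -
  have "infsum g UNIV = infsum g F"
    by (rule infsum_cong_neutral) (use assms in auto)
  then show ?thesis using assms(1) by simp
qed

lemma residual_identity:
  fixes x :: "'i \<Rightarrow> real"
  assumes on: "orthonormal_family d u" and fin: "finite F" and supp: "\<And>i. i \<notin> F \<Longrightarrow> x i = 0"
  shows "(l2norm (\<lambda>i. x i - proj d u x i))\<^sup>2
     = (\<Sum>i\<in>F. (x i)\<^sup>2) - (\<Sum>j<d. (\<Sum>i\<in>F. x i * u j i)\<^sup>2)"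
proof -
  define c where "c j = (\<Sum>i\<in>F. x i * u j i)" for j
  have xl2: "x \<in> l2" by (rule finite_support_l2[OF fin supp])
  have ul2: "\<And>j. j < d \<Longrightarrow> u j \<in> l2" using on unfolding orthonormal_family_def by auto
  have uu: "\<And>j k. j < d \<Longrightarrow> k < d \<Longrightarrow> infsum (\<lambda>i. u j i * u k i) UNIV = (if j = k then 1 else 0)"
    using on unfolding orthonormal_family_def l2inner_def by auto
  have xu: "\<And>j. infsum (\<lambda>i. x i * u j i) UNIV = c j"
    unfolding c_def by (rule infsum_finite_support[OF fin]) (simp add: supp)
  have lc: "\<And>j. l2inner x (u j) = c j" unfolding l2inner_def using xu by simp
  define T1 where "T1 i = (x i)\<^sup>2" for i
  define T2 where "T2 i = (\<Sum>j<d. c j * (x i * u j i))" for i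
  define T3 where "T3 i = (\<Sum>j<d. \<Sum>k<d. (c j * c k) * (u j i * u k i))" for i
  have sq: "(x i - proj d u x i)\<^sup>2 = T1 i + (-2) * T2 i + T3 i" for i
  proof -
    have p: "proj d u x i = (\<Sum>j<d. c j * u j i)" unfolding proj_def lc by simp
    have "(\<Sum>j<d. c j * u j i)\<^sup>2 = T3 i"
      unfolding T3_def power2_eq_square sum_product by (simp add: mult_ac)
    moreover have "x i * (\<Sum>j<d. c j * u j i) = T2 i"
      unfolding T2_def sum_distrib_left by (simp add: mult_ac)
    ultimately show ?thesis unfolding p T1_def
      by (simp add: power2_eq_square algebra_simps)
  qed
  have s1: "T1 summable_on UNIV" using xl2 unfolding T1_def l2_def by simp
  have i1: "infsum T1 UNIV = (\<Sum>i\<in>F. (x i)\<^sup>2)"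
    unfolding T1_def by (rule infsum_finite_support[OF fin]) (simp add: supp)
  have s2i2: "infsum T2 UNIV = (\<Sum>j<d. c j * c j) \<and> T2 summable_on UNIV"
  proof -
    have "infsum (\<lambda>i. \<Sum>j<d. c j * (x i * u j i)) UNIV = (\<Sum>j<d. infsum (\<lambda>i. c j * (x i * u j i)) UNIV)
       \<and> (\<lambda>i. \<Sum>j<d. c j * (x i * u j i)) summable_on UNIV"
      by (rule infsum_sum_swap) (auto intro!: summable_on_cmult_right l2_prod_summable xl2 ul2)
    moreover have "infsum (\<lambda>i. c j * (x i * u j i)) UNIV = c j * c j" if "j < d" for j
      by (subst infsum_cmult_right) (auto intro!: l2_prod_summable xl2 ul2 that simp: xu)
    ultimately show ?thesis unfolding T2_def by simp
  qed
  have s3i3: "infsum T3 UNIV = (\<Sum>j<d. c j * c j) \<and> T3 summable_on UNIV"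
  proof -
    have inner: "infsum (\<lambda>i. \<Sum>k<d. (c j * c k) * (u j i * u k i)) UNIV
        = (\<Sum>k<d. infsum (\<lambda>i. (c j * c k) * (u j i * u k i)) UNIV)
       \<and> (\<lambda>i. \<Sum>k<d. (c j * c k) * (u j i * u k i)) summable_on UNIV" if "j < d" for j
      by (rule infsum_sum_swap) (auto intro!: summable_on_cmult_right l2_prod_summable that ul2)
    have inner2: "(\<Sum>k<d. infsum (\<lambda>i. (c j * c k) * (u j i * u k i)) UNIV) = c j * c j" if "j < d" for j
    proof -
      have "(\<Sum>k<d. infsum (\<lambda>i. (c j * c k) * (u j i * u k i)) UNIV)
          = (\<Sum>k<d. (c j * c k) * (if j = k then 1 else 0))"
        by (rule sum.cong, simp, subst infsum_cmult_right)
           (auto intro!: l2_prod_summable that ul2 simp: uu that)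
      also have "\<dots> = c j * c j" using that by (simp add: if_distrib cong: if_cong)
      finally show ?thesis .
    qed
    have "infsum T3 UNIV = (\<Sum>j<d. infsum (\<lambda>i. \<Sum>k<d. (c j * c k) * (u j i * u k i)) UNIV)
       \<and> T3 summable_on UNIV"
      unfolding T3_def by (rule infsum_sum_swap) (use inner in auto)
    then show ?thesis using inner inner2 by simp
  qed
  have tot: "infsum (\<lambda>i. (x i - proj d u x i)\<^sup>2) UNIV
     = (\<Sum>i\<in>F. (x i)\<^sup>2) - (\<Sum>j<d. c j * c j)"
  proof -
    have a: "(\<lambda>i. (-2) * T2 i) summable_on UNIV" using s2i2 summable_on_cmult_right by blast
    have "infsum (\<lambda>i. T1 i + (-2) * T2 i + T3 i) UNIV
        = infsum T1 UNIV + infsum (\<lambda>i. (-2) * T2 i) UNIV + infsum T3 UNIV"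
      using infsum_add[OF summable_on_add[OF s1 a] conjunct2[OF s3i3]] infsum_add[OF s1 a] by simp
    also have "\<dots> = (\<Sum>i\<in>F. (x i)\<^sup>2) - (\<Sum>j<d. c j * c j)"
      using i1 s2i2 s3i3 infsum_cmult_right[of "-2" T2 UNIV] by simp
    finally show ?thesis using sq by simp
  qed
  have nn: "0 \<le> infsum (\<lambda>i. (x i - proj d u x i)\<^sup>2) UNIV" by (rule infsum_nonneg) simp
  show ?thesis unfolding l2norm_def using tot nn
    by (simp add: c_def power2_eq_square)
qed

definition sgn_of :: "bool \<Rightarrow> real" where "sgn_of b = (if b then -1 else 1)"

lemma sign_choice:
  fixes a :: "'i \<Rightarrow> nat \<Rightarrow> real"
  assumes "finite F"
  shows "\<exists>s::'i\<Rightarrow>bool. (\<Sum>j<d. (\<Sum>i\<in>F. sgn_of (s i) * a i j)\<^sup>2) \<le> (\<Sum>i\<in>F. \<Sum>j<d. (a i j)\<^sup>2)"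
  using assms
proof (induction F rule: finite_induct)
  case empty then show ?case by simp
next
  case (insert x F)
  then obtain s where s: "(\<Sum>j<d. (\<Sum>i\<in>F. sgn_of (s i) * a i j)\<^sup>2) \<le> (\<Sum>i\<in>F. \<Sum>j<d. (a i j)\<^sup>2)" by blast
  define S where "S j = (\<Sum>i\<in>F. sgn_of (s i) * a i j)" for j
  define b where "b = ((\<Sum>j<d. S j * a x j) > 0)"
  define s' where "s' = s(x := b)"
  have cross: "sgn_of b * (\<Sum>j<d. S j * a x j) \<le> 0"
    unfolding b_def sgn_of_def by auto
  have sq1: "sgn_of b * (sgn_of b * y) = y" for y unfolding sgn_of_def by simp
  have eqF: "(\<Sum>i\<in>F. sgn_of (s' i) * a i j) = S j" for j
    unfolding S_def s'_def using insert(2) by (intro sum.cong) auto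
  have "(\<Sum>j<d. (\<Sum>i\<in>insert x F. sgn_of (s' i) * a i j)\<^sup>2)
      = (\<Sum>j<d. (sgn_of b * a x j + S j)\<^sup>2)"
    using insert(1,2) eqF by (simp add: s'_def)
  also have "\<dots> = (\<Sum>j<d. (S j)\<^sup>2) + 2 * (sgn_of b * (\<Sum>j<d. S j * a x j)) + (\<Sum>j<d. (a x j)\<^sup>2)"
    by (simp add: power2_eq_square algebra_simps sum.distrib sum_distrib_left sq1)
  also have "\<dots> \<le> (\<Sum>i\<in>insert x F. \<Sum>j<d. (a i j)\<^sup>2)"
    using s cross insert(1,2) unfolding S_def by simp
  finally show ?case by blast
qed

lemma orthoD: "orthosymmetric \<Gamma> \<Longrightarrow> x \<in> \<Gamma> \<Longrightarrow> (\<lambda>i. if s i then - x i else x i) \<in> \<Gamma>"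
  unfolding orthosymmetric_def by blast

lemma convD: "convex_fun_set \<Gamma> \<Longrightarrow> x \<in> \<Gamma> \<Longrightarrow> y \<in> \<Gamma> \<Longrightarrow> 0 \<le> t \<Longrightarrow> t \<le> 1
   \<Longrightarrow> (\<lambda>i. t * x i + (1 - t) * y i) \<in> \<Gamma>"
  unfolding convex_fun_set_def by blast

lemma key_tail:
  fixes \<Gamma> :: "('i \<Rightarrow> real) set"
  assumes orth: "orthosymmetric \<Gamma>" and conv: "convex_fun_set \<Gamma>"
    and on: "orthonormal_family d u"
    and bound: "\<And>x. x \<in> \<Gamma> \<Longrightarrow> l2norm (\<lambda>i. x i - proj d u x i) < \<delta>"
    and th: "\<theta> \<in> \<Gamma>" and fin: "finite F"
    and Fsub: "\<And>i. i \<in> F \<Longrightarrow> (\<Sum>j<d. (u j i)\<^sup>2) < 1/2"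
  shows "(\<Sum>i\<in>F. (\<theta> i)\<^sup>2) \<le> 2 * \<delta>\<^sup>2"
proof -
  define \<theta>' where "\<theta>' i = (if i \<in> F then \<theta> i else 0)" for i
  have fl: "(\<lambda>i. if i \<notin> F then - \<theta> i else \<theta> i) \<in> \<Gamma>"
    using orthoD[OF orth th, of "\<lambda>i. i \<notin> F"] by simp
  have "(\<lambda>i. (1/2) * \<theta> i + (1 - 1/2) * (if i \<notin> F then - \<theta> i else \<theta> i)) \<in> \<Gamma>"
    by (rule convD[OF conv th fl]) simp_all
  moreover have "(\<lambda>i. (1/2) * \<theta> i + (1 - 1/2) * (if i \<notin> F then - \<theta> i else \<theta> i)) = \<theta>'"
    unfolding \<theta>'_def by (rule ext) auto
  ultimately have th': "\<theta>' \<in> \<Gamma>" by simp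
  define a where "a i j = \<theta> i * u j i" for i j
  obtain s where s: "(\<Sum>j<d. (\<Sum>i\<in>F. sgn_of (s i) * a i j)\<^sup>2) \<le> (\<Sum>i\<in>F. \<Sum>j<d. (a i j)\<^sup>2)"
    using sign_choice[OF fin, where d=d and a=a] by blast
  define x where "x = (\<lambda>i. if s i then - \<theta>' i else \<theta>' i)"
  have xG: "x \<in> \<Gamma>" using orthoD[OF orth th', of s] unfolding x_def by simp
  have xsupp: "\<And>i. i \<notin> F \<Longrightarrow> x i = 0" unfolding x_def \<theta>'_def by simp
  have ri: "(l2norm (\<lambda>i. x i - proj d u x i))\<^sup>2
     = (\<Sum>i\<in>F. (x i)\<^sup>2) - (\<Sum>j<d. (\<Sum>i\<in>F. x i * u j i)\<^sup>2)"
    by (rule residual_identity[OF on fin xsupp])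
  have e1: "(\<Sum>i\<in>F. (x i)\<^sup>2) = (\<Sum>i\<in>F. (\<theta> i)\<^sup>2)"
    unfolding x_def \<theta>'_def by (rule sum.cong) auto
  have e2: "(\<Sum>i\<in>F. x i * u j i) = (\<Sum>i\<in>F. sgn_of (s i) * a i j)" for j
    unfolding x_def \<theta>'_def a_def sgn_of_def by (rule sum.cong) auto
  have nn: "0 \<le> l2norm (\<lambda>i. x i - proj d u x i)" unfolding l2norm_def
    by (intro real_sqrt_ge_zero infsum_nonneg) simp
  have lt: "(l2norm (\<lambda>i. x i - proj d u x i))\<^sup>2 < \<delta>\<^sup>2"
    using bound[OF xG] nn by (simp add: power_strict_mono)
  have e3: "(\<Sum>i\<in>F. \<Sum>j<d. (a i j)\<^sup>2) = (\<Sum>i\<in>F. (\<theta> i)\<^sup>2 * (\<Sum>j<d. (u j i)\<^sup>2))"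
    unfolding a_def by (simp add: power_mult_distrib sum_distrib_left)
  have e4: "(\<Sum>i\<in>F. (\<theta> i)\<^sup>2 * (\<Sum>j<d. (u j i)\<^sup>2)) \<le> (\<Sum>i\<in>F. (\<theta> i)\<^sup>2 * (1/2))"
    by (rule sum_mono, rule mult_left_mono) (use Fsub in \<open>auto intro: less_imp_le\<close>)
  have "(\<Sum>i\<in>F. (\<theta> i)\<^sup>2) - (\<Sum>i\<in>F. (\<theta> i)\<^sup>2 * (1/2)) < \<delta>\<^sup>2"
    using ri e1 e2 lt s e3 e4 by simp
  moreover have "(\<Sum>i\<in>F. (\<theta> i)\<^sup>2 * (1/2)) = (\<Sum>i\<in>F. (\<theta> i)\<^sup>2) * (1/2)"
    by (rule sum_distrib_right[symmetric])
  ultimately show ?thesis by linarith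
qed

lemma heavy_coords:
  assumes on: "orthonormal_family d u"
  shows "finite {i. (\<Sum>j<d. (u j i)\<^sup>2) \<ge> 1/2} \<and> card {i. (\<Sum>j<d. (u j i)\<^sup>2) \<ge> 1/2} \<le> 2 * d"
proof -
  define A where "A = {i. (\<Sum>j<d. (u j i)\<^sup>2) \<ge> 1/2}"
  have G: "card G \<le> 2 * d" if "finite G" "G \<subseteq> A" for G
  proof -
    have "real (card G) * (1/2) = (\<Sum>i\<in>G. 1/2)" by simp
    also have "\<dots> \<le> (\<Sum>i\<in>G. \<Sum>j<d. (u j i)\<^sup>2)"
      by (rule sum_mono) (use that in \<open>auto simp: A_def\<close>)
    also have "\<dots> = (\<Sum>j<d. \<Sum>i\<in>G. (u j i)\<^sup>2)" by (rule sum.swap)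
    also have "\<dots> \<le> (\<Sum>j<d. 1)"
    proof (rule sum_mono)
      fix j assume "j \<in> {..<d}"
      then have ul: "u j \<in> l2" and one: "infsum (\<lambda>i. (u j i)\<^sup>2) UNIV = 1"
        using on unfolding orthonormal_family_def l2inner_def by (auto simp: power2_eq_square)
      show "(\<Sum>i\<in>G. (u j i)\<^sup>2) \<le> 1"
        using finite_sum_le_infsum[OF l2_sq_summable[OF ul] that(1), of UNIV] one by simp
    qed
    finally show ?thesis by simp
  qed
  have fin: "finite A"
  proof (rule ccontr)
    assume "infinite A"
    then obtain G where "finite G" "card G = 2 * d + 1" "G \<subseteq> A"
      using infinite_arbitrarily_large by blast
    then show False using G by fastforce
  qed
  show ?thesis using fin G[OF fin] unfolding A_def by simp
qed

lemma l2_diff: "f \<in> l2 \<Longrightarrow> g \<in> l2 \<Longrightarrow> (\<lambda>i. f i - g i) \<in> l2"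
  using l2_add[of f g 1 "-1"] by simp

lemma l2_minkowski:
  assumes f: "f \<in> l2" and g: "g \<in> l2"
  shows "sqrt (infsum (\<lambda>i. (f i + g i)\<^sup>2) B)
     \<le> sqrt (infsum (\<lambda>i. (f i)\<^sup>2) B) + sqrt (infsum (\<lambda>i. (g i)\<^sup>2) B)"
proof -
  define b where "b = sqrt (infsum (\<lambda>i. (f i)\<^sup>2) B) + sqrt (infsum (\<lambda>i. (g i)\<^sup>2) B)"
  have fg: "(\<lambda>i. f i + g i) \<in> l2" using l2_add[OF f g, of 1 1] by simp
  have b0: "0 \<le> b" unfolding b_def by (intro add_nonneg_nonneg real_sqrt_ge_zero infsum_nonneg) auto
  have "infsum (\<lambda>i. (f i + g i)\<^sup>2) B \<le> b\<^sup>2"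
  proof (rule infsum_le_finite_sums[OF l2_sq_summable[OF fg]])
    fix F assume F: "finite F" "F \<subseteq> B"
    have lf: "L2_set f F \<le> sqrt (infsum (\<lambda>i. (f i)\<^sup>2) B)"
      unfolding L2_set_def using finite_sum_le_infsum[OF l2_sq_summable[OF f] F] by simp
    have lg: "L2_set g F \<le> sqrt (infsum (\<lambda>i. (g i)\<^sup>2) B)"
      unfolding L2_set_def using finite_sum_le_infsum[OF l2_sq_summable[OF g] F] by simp
    have "L2_set (\<lambda>i. f i + g i) F \<le> b"
      using L2_set_triangle_ineq[of f g F] lf lg unfolding b_def by linarith
    moreover have "0 \<le> L2_set (\<lambda>i. f i + g i) F" by (rule L2_set_nonneg)
    ultimately have "(L2_set (\<lambda>i. f i + g i) F)\<^sup>2 \<le> b\<^sup>2" by (rule power_mono)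
    then show "(\<Sum>i\<in>F. (f i + g i)\<^sup>2) \<le> b\<^sup>2"
      unfolding L2_set_def by (simp add: sum_nonneg)
  qed
  then have "sqrt (infsum (\<lambda>i. (f i + g i)\<^sup>2) B) \<le> sqrt (b\<^sup>2)" by (rule real_sqrt_le_mono)
  then show ?thesis using b0 unfolding b_def by simp
qed

lemma l2_metric: "Metric_space l2 l2dist"
proof
  fix x y z :: "'i \<Rightarrow> real"
  show "0 \<le> l2dist x y" unfolding l2dist_def l2norm_def
    by (intro real_sqrt_ge_zero infsum_nonneg) auto
  show "l2dist x y = l2dist y x" unfolding l2dist_def l2norm_def
    by (simp add: power2_commute)
  assume x: "x \<in> l2" and y: "y \<in> l2"
  show "l2dist x y = 0 \<longleftrightarrow> x = y"
  proof
    assume "l2dist x y = 0"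
    then have z: "infsum (\<lambda>i. (x i - y i)\<^sup>2) UNIV \<le> 0"
      unfolding l2dist_def l2norm_def using infsum_nonneg[of UNIV "\<lambda>i. (x i - y i)\<^sup>2"] by simp
    have "(x i - y i)\<^sup>2 = 0" for i
      by (rule nonneg_infsum_le_0D[OF z l2_sq_summable[OF l2_diff[OF x y]]]) auto
    then show "x = y" by auto
  qed (simp add: l2dist_def l2norm_def)
  assume z: "z \<in> l2"
  have "sqrt (infsum (\<lambda>i. ((x i - y i) + (y i - z i))\<^sup>2) UNIV)
     \<le> sqrt (infsum (\<lambda>i. (x i - y i)\<^sup>2) UNIV) + sqrt (infsum (\<lambda>i. (y i - z i)\<^sup>2) UNIV)"
    by (rule l2_minkowski[OF l2_diff[OF x y] l2_diff[OF y z]])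
  then show "l2dist x z \<le> l2dist x y + l2dist y z"
    unfolding l2dist_def l2norm_def by simp
qed

lemma single_tail:
  assumes f: "f \<in> l2" and e: "e > 0"
  shows "\<exists>A. finite A \<and> infsum (\<lambda>i. (f i)\<^sup>2) (- A) \<le> e"
proof -
  obtain F where F: "finite F" "dist (sum (\<lambda>i. (f i)\<^sup>2) F) (infsum (\<lambda>i. (f i)\<^sup>2) UNIV) \<le> e"
    using infsum_finite_approximation[OF l2_sq_summable[OF f] e] by blast
  have "infsum (\<lambda>i. (f i)\<^sup>2) (- F) \<le> e"
  proof (rule infsum_le_finite_sums[OF l2_sq_summable[OF f]])
    fix G assume G: "finite G" "G \<subseteq> - F"
    have "sum (\<lambda>i. (f i)\<^sup>2) G + sum (\<lambda>i. (f i)\<^sup>2) F = sum (\<lambda>i. (f i)\<^sup>2) (G \<union> F)"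
      using G F(1) by (simp add: sum.union_disjoint disjoint_iff subset_iff)
    also have "\<dots> \<le> infsum (\<lambda>i. (f i)\<^sup>2) UNIV"
      by (rule finite_sum_le_infsum[OF l2_sq_summable[OF f]]) (use G F in auto)
    finally show "sum (\<lambda>i. (f i)\<^sup>2) G \<le> e" using F(2) unfolding dist_real_def by linarith
  qed
  then show ?thesis using F(1) by blast
qed

lemma l2_compact_sub: "l2_compact \<Gamma> \<Longrightarrow> \<Gamma> \<subseteq> l2"
proof -
  interpret M: Metric_space l2 l2dist by (rule l2_metric)
  show "l2_compact \<Gamma> \<Longrightarrow> \<Gamma> \<subseteq> l2"
    unfolding l2_compact_def using compactin_subset_topspace by fastforce
qed

lemma compact_tails:
  fixes \<Gamma> :: "('i \<Rightarrow> real) set"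
  assumes cpt: "l2_compact \<Gamma>" and eta: "\<eta> > 0"
  shows "\<exists>A. finite A \<and> (\<forall>x\<in>\<Gamma>. infsum (\<lambda>i. (x i)\<^sup>2) (- A) \<le> \<eta>\<^sup>2)"
proof -
  interpret M: Metric_space l2 l2dist by (rule l2_metric)
  have "M.mtotally_bounded \<Gamma>"
    using cpt unfolding l2_compact_def by (rule M.compactin_imp_mtotally_bounded)
  then obtain K where K: "finite K" "K \<subseteq> \<Gamma>" "\<Gamma> \<subseteq> (\<Union>c\<in>K. M.mball c (\<eta>/2))"
    unfolding M.mtotally_bounded_def using eta by (meson half_gt_zero)
  have Gl2: "\<Gamma> \<subseteq> l2" using cpt unfolding l2_compact_def using compactin_subset_topspace by fastforce
  have "\<forall>c\<in>K. \<exists>A. finite A \<and> infsum (\<lambda>i. (c i)\<^sup>2) (- A) \<le> (\<eta>/2)\<^sup>2"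
    using K(2) Gl2 eta by (intro ballI single_tail) auto
  then obtain Ac where Ac: "\<And>c. c \<in> K \<Longrightarrow> finite (Ac c) \<and> infsum (\<lambda>i. (c i)\<^sup>2) (- Ac c) \<le> (\<eta>/2)\<^sup>2"
    by metis
  define A where "A = (\<Union>c\<in>K. Ac c)"
  have finA: "finite A" unfolding A_def using K(1) Ac by auto
  have "infsum (\<lambda>i. (x i)\<^sup>2) (- A) \<le> \<eta>\<^sup>2" if xG: "x \<in> \<Gamma>" for x
  proof -
    obtain c where c: "c \<in> K" "x \<in> M.mball c (\<eta>/2)" using K(3) xG by blast
    have cl2: "c \<in> l2" and xl2: "x \<in> l2" using c K(2) Gl2 xG by auto
    have dc: "l2dist c x < \<eta>/2" using c by simp
    have AcA: "- A \<subseteq> - Ac c" unfolding A_def using c by auto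
    have t1: "infsum (\<lambda>i. (x i - c i)\<^sup>2) (- A) \<le> infsum (\<lambda>i. (x i - c i)\<^sup>2) UNIV"
      by (rule infsum_mono2) (auto intro: l2_sq_summable[OF l2_diff[OF xl2 cl2]])
    have "sqrt (infsum (\<lambda>i. (x i - c i)\<^sup>2) UNIV) = l2dist c x"
      unfolding l2dist_def l2norm_def by (simp add: power2_commute)
    then have s1: "sqrt (infsum (\<lambda>i. (x i - c i)\<^sup>2) (- A)) \<le> \<eta>/2"
      using dc real_sqrt_le_mono[OF t1] by linarith
    have t2: "infsum (\<lambda>i. (c i)\<^sup>2) (- A) \<le> infsum (\<lambda>i. (c i)\<^sup>2) (- Ac c)"
      by (rule infsum_mono2) (use AcA in \<open>auto intro: l2_sq_summable cl2\<close>)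
    then have "sqrt (infsum (\<lambda>i. (c i)\<^sup>2) (- A)) \<le> sqrt ((\<eta>/2)\<^sup>2)"
      using Ac[OF c(1)] by (meson order_trans real_sqrt_le_mono)
    then have s2: "sqrt (infsum (\<lambda>i. (c i)\<^sup>2) (- A)) \<le> \<eta>/2" using eta by simp
    have "sqrt (infsum (\<lambda>i. ((x i - c i) + c i)\<^sup>2) (- A))
       \<le> sqrt (infsum (\<lambda>i. (x i - c i)\<^sup>2) (- A)) + sqrt (infsum (\<lambda>i. (c i)\<^sup>2) (- A))"
      by (rule l2_minkowski[OF l2_diff[OF xl2 cl2] cl2])
    then have "sqrt (infsum (\<lambda>i. (x i)\<^sup>2) (- A)) \<le> \<eta>" using s1 s2 by simp
    moreover have nn: "0 \<le> infsum (\<lambda>i. (x i)\<^sup>2) (- A)" by (rule infsum_nonneg) simp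
    ultimately have "(sqrt (infsum (\<lambda>i. (x i)\<^sup>2) (- A)))\<^sup>2 \<le> \<eta>\<^sup>2"
      by (intro power_mono) auto
    then show ?thesis using nn by simp
  qed
  then show ?thesis using finA by blast
qed

lemma coord_width:
  fixes \<Gamma> :: "('i \<Rightarrow> real) set"
  assumes finA: "finite A" and tails: "\<And>x. x \<in> \<Gamma> \<Longrightarrow> infsum (\<lambda>i. (x i)\<^sup>2) (- A) \<le> \<eta>\<^sup>2"
    and eta: "\<eta> \<ge> 0"
  shows "kolmogorov_width \<Gamma> (card A) \<le> ereal \<eta>"
proof -
  define d where "d = card A"
  obtain e where e: "bij_betw e {0..<d} A" using ex_bij_betw_nat_finite[OF finA] unfolding d_def by blast
  have ein: "\<And>j. j < d \<Longrightarrow> e j \<in> A" using e by (auto dest: bij_betw_apply)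
  have einj: "inj_on e {..<d}" using e bij_betw_imp_inj_on by (metis atLeast0LessThan)
  define u where "u j i = (if i = e j then 1 else (0::real))" for j i
  have ul2: "u j \<in> l2" for j by (rule finite_support_l2[of "{e j}"]) (auto simp: u_def)
  have inner: "l2inner x (u j) = x (e j)" for x :: "'i \<Rightarrow> real" and j
  proof -
    have "l2inner x (u j) = (\<Sum>i\<in>{e j}. x i * u j i)" unfolding l2inner_def
      by (rule infsum_finite_support) (auto simp: u_def)
    then show ?thesis by (simp add: u_def)
  qed
  have on: "orthonormal_family d u"
    unfolding orthonormal_family_def
  proof (intro conjI allI impI)
    fix j k assume j: "j < d" and k: "k < d"
    have "l2inner (u j) (u k) = u j (e k)" by (rule inner)
    also have "\<dots> = (if j = k then 1 else 0)"
      using einj j k unfolding u_def inj_on_def by auto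
    finally show "l2inner (u j) (u k) = (if j = k then 1 else 0)" .
  qed (simp add: ul2)
  have pr: "proj d u x i = (if i \<in> A then x i else 0)" for x :: "'i \<Rightarrow> real" and i
  proof -
    have "proj d u x i = (\<Sum>j\<in>{0..<d}. (\<lambda>a. if i = a then x a else 0) (e j))"
      unfolding proj_def inner u_def by (intro sum.cong) (auto simp: atLeast0LessThan)
    also have "\<dots> = (\<Sum>a\<in>A. (if i = a then x a else 0))"
      by (rule sum.reindex_bij_betw[OF e])
    also have "\<dots> = (if i \<in> A then x i else 0)" using finA by (simp add: sum.delta)
    finally show ?thesis .
  qed
  have res: "l2norm (\<lambda>i. x i - proj d u x i) \<le> \<eta>" if x: "x \<in> \<Gamma>" for x
  proof -
    have "infsum (\<lambda>i. (x i - proj d u x i)\<^sup>2) UNIV = infsum (\<lambda>i. (x i)\<^sup>2) (- A)"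
      by (rule infsum_cong_neutral) (auto simp: pr)
    then have "l2norm (\<lambda>i. x i - proj d u x i) = sqrt (infsum (\<lambda>i. (x i)\<^sup>2) (- A))"
      unfolding l2norm_def by simp
    also have "\<dots> \<le> sqrt (\<eta>\<^sup>2)" using tails[OF x] by (rule real_sqrt_le_mono)
    finally show ?thesis using eta by simp
  qed
  have "kolmogorov_width \<Gamma> d \<le> (SUP x\<in>\<Gamma>. ereal (l2norm (\<lambda>i. x i - proj d u x i)))"
    unfolding kolmogorov_width_def by (rule INF_lower) (simp add: on)
  also have "\<dots> \<le> ereal \<eta>" by (rule SUP_least) (simp add: res)
  finally show ?thesis unfolding d_def .
qed

theorem mainTheorem13:
  fixes \<Gamma> :: "('i::countable \<Rightarrow> real) set" and \<epsilon> :: real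
  assumes "orthosymmetric \<Gamma>" and "convex_fun_set \<Gamma>" and "l2_compact \<Gamma>"
    and "\<epsilon> > 0"
  shows "real (kolmogorov_dim \<Gamma> (\<epsilon> / real (coord_kolmogorov_dim \<Gamma> \<epsilon>)))
           \<ge> real (coord_kolmogorov_dim \<Gamma> \<epsilon>) / 2 - 2"
proof -
  note orth = assms(1) and conv = assms(2) and cpt = assms(3) and ep = assms(4)
  define m where "m = coord_kolmogorov_dim \<Gamma> \<epsilon>"
  show ?thesis
  proof (cases "m \<le> 4")
    case True
    then show ?thesis unfolding m_def[symmetric] by simp
  next
    case False
    then have m5: "real m \<ge> 5" by simp
    define \<delta> where "\<delta> = \<epsilon> / real m"
    have dpos: "\<delta> > 0" unfolding \<delta>_def using ep m5 by simp
    have dlt: "\<delta> < \<epsilon> / 2" unfolding \<delta>_def using ep m5 by (intro divide_strict_left_mono) auto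
    obtain A0 where A0: "finite A0" "\<forall>x\<in>\<Gamma>. infsum (\<lambda>i. (x i)\<^sup>2) (- A0) \<le> \<delta>\<^sup>2"
      using compact_tails[OF cpt dpos] by blast
    have "kolmogorov_width \<Gamma> (card A0) \<le> ereal \<delta>"
      by (rule coord_width[OF A0(1)]) (use A0(2) dpos in auto)
    then have kw: "kolmogorov_width \<Gamma> (kolmogorov_dim \<Gamma> \<delta>) \<le> ereal \<delta>"
      unfolding kolmogorov_dim_def by (rule LeastI)
    define k where "k = kolmogorov_dim \<Gamma> \<delta>"
    have "ereal \<delta> < ereal (\<epsilon> / 2)" using dlt by simp
    then have "kolmogorov_width \<Gamma> k < ereal (\<epsilon> / 2)" using kw unfolding k_def
      by (rule le_less_trans[rotated])
    then obtain u where on: "orthonormal_family k u"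
      and sup: "(SUP x\<in>\<Gamma>. ereal (l2norm (\<lambda>i. x i - proj k u x i))) < ereal (\<epsilon> / 2)"
      unfolding kolmogorov_width_def INF_less_iff by auto
    have bnd: "l2norm (\<lambda>i. x i - proj k u x i) < \<epsilon> / 2" if "x \<in> \<Gamma>" for x
      using SUP_lessD[OF sup that] by simp
    define A where "A = {i. (\<Sum>j<k. (u j i)\<^sup>2) \<ge> 1/2}"
    have hv: "finite A" "card A \<le> 2 * k" using heavy_coords[OF on] unfolding A_def by auto
    have Gl2: "\<Gamma> \<subseteq> l2" by (rule l2_compact_sub[OF cpt])
    have tl: "infsum (\<lambda>i. (\<theta> i)\<^sup>2) (- A) \<le> \<epsilon>\<^sup>2" if th: "\<theta> \<in> \<Gamma>" for \<theta>
    proof (rule infsum_le_finite_sums)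
      show "(\<lambda>i. (\<theta> i)\<^sup>2) summable_on - A" using th Gl2 by (auto intro: l2_sq_summable)
      fix F assume F: "finite F" "F \<subseteq> - A"
      have "(\<Sum>i\<in>F. (\<theta> i)\<^sup>2) \<le> 2 * (\<epsilon> / 2)\<^sup>2"
        by (rule key_tail[OF orth conv on bnd th F(1)]) (use F in \<open>auto simp: A_def\<close>)
      also have "\<dots> \<le> \<epsilon>\<^sup>2" by (simp add: power2_eq_square)
      finally show "(\<Sum>i\<in>F. (\<theta> i)\<^sup>2) \<le> \<epsilon>\<^sup>2" .
    qed
    have "m \<le> card A" unfolding m_def coord_kolmogorov_dim_def
      by (rule Least_le) (use hv tl in blast)
    then have "real m \<le> 2 * real k" using hv by linarith
    then show ?thesis unfolding m_def[symmetric] \<delta>_def[symmetric] k_def[symmetric] by simp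
  qed
qed

end
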